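(* Let $P,Q,R\in D_P$ be three points not lying on a common hyperbolic line, and let $m\in\mathbb{Z}_{\ge 0}$ be the number of ideal triangles circumscribing $\triangle PQR$. Let $h$ be the hyperbolic length of the perpendicular geodesic segment from $R$ to the hyperbolic line through $P$ and $Q$. Then $$m=\begin{cases}0 & \text{if } h<\Delta(P,Q),\\ 1 & \text{if } h=\Delta(P,Q),\\ 2 & \text{if } h>\Delta(P,Q).\end{cases}$$
   Context: $D_P=\{z\in\mathbb{C}:|z|<1\}$ is the Poincaré disk with metric $ds^2=4\frac{dx^2+dy^2}{(1-x^2-y^2)^2}$, and $S^1=\{|z|=1\}$ is its boundary at infinity. Hyperbolic lines are arcs of circles or diameters orthogonal to $S^1$. The hyperbolic distance is $d(P,Q)=\operatorname{arccosh}\left(1+\frac{2|P-Q|^2}{(1-|P|^2)(1-|Q|^2)}\right)$, and $\Delta(P,Q):=\log\frac{e^{d(P,Q)}+1}{e^{d(P,Q)}-1}=\log\coth\frac{d(P,Q)}{2}$. An ideal triangle circumscribing $\triangle PQR$ (a "triangle inscribed in $S^1$ and circumscribing $\triangle PQR$") is a triangle whose three vertices are distinct points of $S^1$ and whose sides are hyperbolic lines joining them, such that $P$, $Q$, $R$ lie on three distinct sides (one point on each side). *)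

theory Defs
  imports Complex_Main
begin

definition disk :: "complex set" where
  "disk = {z. cmod z < 1}"

definition circle_at_infinity :: "complex set" where
  "circle_at_infinity = {z. cmod z = 1}"

definition orth_gcircle :: "complex set \<Rightarrow> bool" where
  "orth_gcircle C \<longleftrightarrow>
     (\<exists>c r. r > 0 \<and> cmod c ^ 2 = 1 + r ^ 2 \<and> C = {z. cmod (z - c) = r}) \<or>
     (\<exists>n. n \<noteq> 0 \<and> C = {z. Re (cnj n * z) = 0})"

definition hyp_line :: "complex set \<Rightarrow> bool" where
  "hyp_line L \<longleftrightarrow> (\<exists>C. orth_gcircle C \<and> L = C \<inter> disk)"

definition hyp_line_joining :: "complex \<Rightarrow> complex \<Rightarrow> complex set \<Rightarrow> bool" where
  "hyp_line_joining a b L \<longleftrightarrow> (\<exists>C. orth_gcircle C \<and> a \<in> C \<and> b \<in> C \<and> L = C \<inter> disk)"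

definition hdist :: "complex \<Rightarrow> complex \<Rightarrow> real" where
  "hdist P Q = arcosh (1 + 2 * cmod (P - Q) ^ 2 / ((1 - cmod P ^ 2) * (1 - cmod Q ^ 2)))"

definition Delta :: "complex \<Rightarrow> complex \<Rightarrow> real" where
  "Delta P Q = ln ((exp (hdist P Q) + 1) / (exp (hdist P Q) - 1))"

definition circumscribing_ideal_triangle ::
  "complex set \<Rightarrow> complex \<Rightarrow> complex \<Rightarrow> complex \<Rightarrow> bool" where
  "circumscribing_ideal_triangle T P Q R \<longleftrightarrow>
     (\<exists>a b c. T = {a, b, c} \<and> a \<noteq> b \<and> b \<noteq> c \<and> a \<noteq> c \<and>
        a \<in> circle_at_infinity \<and> b \<in> circle_at_infinity \<and> c \<in> circle_at_infinity \<and>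
        (\<exists>Lab Lbc Lca. hyp_line_joining a b Lab \<and> hyp_line_joining b c Lbc \<and>
           hyp_line_joining c a Lca \<and> P \<in> Lab \<and> Q \<in> Lbc \<and> R \<in> Lca))"

text \<open>Hyperbolic distance from a point to a set (for a hyperbolic line: the length
  of the perpendicular geodesic segment).\<close>
definition hdist_set :: "complex \<Rightarrow> complex set \<Rightarrow> real" where
  "hdist_set R L = Inf (hdist R ` L)"

end

theory Submission
  imports Defs
begin



definition hform :: "real \<Rightarrow> complex \<Rightarrow> real \<Rightarrow> complex \<Rightarrow> real" where
  "hform A W D z = A * (cmod z)^2 - 2 * Re (cnj W * z) + D"

definition geo :: "complex \<Rightarrow> complex \<Rightarrow> complex set" where
  "geo a b = {z \<in> disk. hform (Im (cnj a * b)) (\<i> * (a - b)) (Im (cnj a * b)) z = 0}"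

lemma cmod_sq: "(cmod z)^2 = (Re z)^2 + (Im z)^2"
  by (simp add: cmod_def)

lemma sq_eq_iff: "0 \<le> (x::real) \<Longrightarrow> 0 \<le> r \<Longrightarrow> (x = r) \<longleftrightarrow> x^2 = r^2"
  by (metis power2_eq_imp_eq)

lemma orth_to_form:
  assumes "orth_gcircle C"
  shows "\<exists>A W. cmod W > \<bar>A\<bar> \<and> C = {z. hform A W A z = 0}"
  using assms unfolding orth_gcircle_def
proof
  assume "\<exists>c r. r > 0 \<and> cmod c ^ 2 = 1 + r ^ 2 \<and> C = {z. cmod (z - c) = r}"
  then obtain c r where r: "r > 0" "cmod c ^ 2 = 1 + r ^ 2" "C = {z. cmod (z - c) = r}" by blast
  have "cmod c ^ 2 > 1 ^ 2" using r by (simp add: power2_eq_square)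
  hence "cmod c > 1" by (smt (verit) norm_ge_zero power_mono)
  moreover have "C = {z. hform 1 c 1 z = 0}"
  proof -
    have "cmod (z - c) = r \<longleftrightarrow> hform 1 c 1 z = 0" for z
    proof -
      have "cmod (z - c) = r \<longleftrightarrow> cmod (z - c) ^ 2 = r ^ 2"
        using r(1) by (intro sq_eq_iff) auto
      also have "\<dots> \<longleftrightarrow> hform 1 c 1 z = 0"
        using r(2) unfolding hform_def cmod_sq by (auto simp: algebra_simps power2_eq_square)
      finally show ?thesis .
    qed
    thus ?thesis using r(3) by auto
  qed
  ultimately show ?thesis by (intro exI[of _ 1] exI[of _ c]) auto
next
  assume "\<exists>n. n \<noteq> 0 \<and> C = {z. Re (cnj n * z) = 0}"
  then obtain n where n: "n \<noteq> 0" "C = {z. Re (cnj n * z) = 0}" by blast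
  have "hform 0 n 0 z = 0 \<longleftrightarrow> Re (cnj n * z) = 0" for z unfolding hform_def by (simp; smt (verit))
  hence "C = {z. hform 0 n 0 z = 0}" using n by auto
  thus ?thesis using n by (intro exI[of _ 0] exI[of _ n]) auto
qed

lemma form_to_orth:
  assumes "cmod W > \<bar>A\<bar>"
  shows "orth_gcircle {z. hform A W A z = 0}"
proof (cases "A = 0")
  case True
  have "hform A W A z = 0 \<longleftrightarrow> Re (cnj W * z) = 0" for z unfolding hform_def using True by (simp; smt (verit))
  hence "{z. hform A W A z = 0} = {z. Re (cnj W * z) = 0}" by auto
  moreover have "W \<noteq> 0" using assms by auto
  ultimately show ?thesis unfolding orth_gcircle_def by (intro disjI2 exI[of _ W]) simp
next
  case False
  define c where "c = W / of_real A"
  have "cmod c = cmod W / \<bar>A\<bar>" unfolding c_def by (simp add: norm_divide)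
  hence c1: "cmod c > 1" using assms False by simp
  define r where "r = sqrt (cmod c ^ 2 - 1)"
  have c2: "cmod c ^ 2 > 1" using c1
    by (metis less_1_mult power2_eq_square)
  have r0: "r > 0" unfolding r_def using c2 by simp
  have rr: "r ^ 2 = cmod c ^ 2 - 1" unfolding r_def using c2 by simp
  have "cmod (z - c) = r \<longleftrightarrow> hform A W A z = 0" for z
  proof -
    have "cmod (z - c) = r \<longleftrightarrow> cmod (z - c) ^ 2 = r ^ 2"
      using r0 by (intro sq_eq_iff) auto
    also have "\<dots> \<longleftrightarrow> A * (cmod (z - c) ^ 2 - r ^ 2) = 0" using False by simp
    also have "A * (cmod (z - c) ^ 2 - r ^ 2) = hform A W A z"
    proof -
      have e1: "cmod (z - c) ^ 2 = cmod z ^ 2 - 2 * Re (cnj c * z) + cmod c ^ 2"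
        unfolding cmod_sq by (simp add: power2_eq_square algebra_simps)
      have e2: "A * Re (cnj c * z) = Re (cnj W * z)"
      proof -
        have "cnj c = cnj W / of_real A" unfolding c_def by simp
        hence "of_real A * cnj c = cnj W" using False by simp
        hence "of_real A * (cnj c * z) = cnj W * z" by (simp add: mult.assoc)
        from arg_cong[OF this, of Re] show ?thesis by simp
      qed
      show ?thesis unfolding hform_def e1 rr using e2 by (simp add: algebra_simps)
    qed
    finally show ?thesis .
  qed
  hence "{z. hform A W A z = 0} = {z. cmod (z - c) = r}" by auto
  moreover have "cmod c ^ 2 = 1 + r ^ 2" using rr by simp
  ultimately show ?thesis unfolding orth_gcircle_def using r0 by (intro disjI1 exI[of _ c] exI[of _ r]) simp
qed




lemma unit_sq: "cmod a = 1 \<Longrightarrow> (Re a)^2 + (Im a)^2 = 1"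
  by (metis cmod_sq power_one)

lemma hform_scale: "hform (s*A) (of_real s * W) (s*A) z = s * hform A W A z"
  unfolding hform_def by (simp add: algebra_simps)

lemma hform_unit: "cmod a = 1 \<Longrightarrow> hform A W A a = 2*A - 2 * (Re W * Re a + Im W * Im a)"
  unfolding hform_def by simp

lemma form_prop:
  assumes "cmod a = 1" "cmod b = 1" "a \<noteq> b" "hform A W A a = 0" "hform A W A b = 0"
  shows "\<exists>s. A = s * Im (cnj a * b) \<and> W = of_real s * (\<i> * (a - b))"
proof -
  define a1 a2 b1 b2 u v where "a1 = Re a" "a2 = Im a" "b1 = Re b" "b2 = Im b" "u = Re W" "v = Im W"
  have ha: "u*a1 + v*a2 = A" using assms(4) hform_unit[OF assms(1)] unfolding a1_a2_b1_b2_u_v_def by simp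
  have hb: "u*b1 + v*b2 = A" using assms(5) hform_unit[OF assms(2)] unfolding a1_a2_b1_b2_u_v_def by simp
  define d1 d2 where "d1 = a1 - b1" "d2 = a2 - b2"
  have dd: "d1^2 + d2^2 > 0"
  proof -
    have "d1 \<noteq> 0 \<or> d2 \<noteq> 0" using assms(3) unfolding d1_d2_def a1_a2_b1_b2_u_v_def
      by (auto simp: complex_eq_iff)
    thus ?thesis by (auto simp: add_pos_nonneg add_nonneg_pos)
  qed
  have hd: "u*d1 + v*d2 = 0" using ha hb unfolding d1_d2_def by (simp add: algebra_simps)
  define s where "s = (v*d1 - u*d2) / (d1^2 + d2^2)"
  have us: "u = - s * d2"
  proof -
    have hd': "u*d1 = - (v*d2)" using hd by linarith
    have "u * (d1^2+d2^2) = (u*d1)*d1 + u*d2*d2" by (simp add: power2_eq_square algebra_simps)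
    also have "\<dots> = - (v*d1 - u*d2) * d2" unfolding hd' by (simp add: algebra_simps)
    finally have "u * (d1^2+d2^2) = - (v*d1 - u*d2) * d2" .
    hence "u = (- (v*d1 - u*d2) * d2) / (d1^2+d2^2)" using dd by (intro eq_divide_imp) auto
    thus ?thesis unfolding s_def by (metis (no_types) minus_diff_eq minus_divide_left mult_minus_left times_divide_eq_left)
  qed
  have vs: "v = s * d1"
  proof -
    have hd': "v*d2 = - (u*d1)" using hd by linarith
    have "v * (d1^2+d2^2) = v*d1*d1 + (v*d2)*d2" by (simp add: power2_eq_square algebra_simps)
    also have "\<dots> = (v*d1 - u*d2) * d1" unfolding hd' by (simp add: algebra_simps)
    finally have "v * (d1^2+d2^2) = (v*d1 - u*d2) * d1" .
    hence "v = ((v*d1 - u*d2) * d1) / (d1^2+d2^2)" using dd by (intro eq_divide_imp) auto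
    thus ?thesis unfolding s_def by (simp add: times_divide_eq_left)
  qed
  have "A = s * (a1*b2 - a2*b1)" using ha us vs unfolding d1_d2_def by (simp add: algebra_simps)
  hence "A = s * Im (cnj a * b)" unfolding a1_a2_b1_b2_u_v_def by (simp add: algebra_simps)
  moreover have "W = of_real s * (\<i> * (a - b))"
    using us vs unfolding complex_eq_iff d1_d2_def a1_a2_b1_b2_u_v_def by (simp add: algebra_simps)
  ultimately show ?thesis by blast
qed

lemma geo_form_at:
  assumes "cmod a = 1" "cmod b = 1"
  shows "hform (Im (cnj a * b)) (\<i> * (a - b)) (Im (cnj a * b)) a = 0"
    and "hform (Im (cnj a * b)) (\<i> * (a - b)) (Im (cnj a * b)) b = 0"
  using unit_sq[OF assms(1)] unit_sq[OF assms(2)] unfolding hform_unit[OF assms(1)] hform_unit[OF assms(2)]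
  by (simp_all add: algebra_simps power2_eq_square)

lemma geo_W:
  assumes "cmod a = 1" "cmod b = 1" "a \<noteq> b"
  shows "cmod (\<i> * (a - b)) > \<bar>Im (cnj a * b)\<bar>"
proof -
  define a1 a2 b1 b2 where "a1 = Re a" "a2 = Im a" "b1 = Re b" "b2 = Im b"
  have ua: "a1^2 + a2^2 = 1" and ub: "b1^2+b2^2 = 1"
    using unit_sq[OF assms(1)] unit_sq[OF assms(2)] unfolding a1_a2_b1_b2_def by auto
  define c where "c = a1*b1 + a2*b2"
  have sq1: "cmod (\<i> * (a - b))^2 = 2 - 2*c"
    using ua ub unfolding cmod_sq c_def a1_a2_b1_b2_def by (simp add: power2_eq_square algebra_simps)
  have sq2: "(Im (cnj a * b))^2 = 1 - c^2"
  proof -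
    have "(a1*b2 - a2*b1)^2 = (a1^2+a2^2)*(b1^2+b2^2) - c^2" unfolding c_def
      by (simp add: power2_eq_square algebra_simps)
    hence "(a1*b2 - a2*b1)^2 = 1 - c^2" unfolding ua ub by simp
    moreover have "Im (cnj a * b) = a1*b2 - a2*b1" unfolding a1_a2_b1_b2_def by simp
    ultimately show ?thesis by simp
  qed
  have "c \<noteq> 1"
  proof
    assume "c = 1"
    hence "(a1-b1)^2 + (a2-b2)^2 = 0" using ua ub unfolding c_def by (simp add: power2_eq_square algebra_simps)
    hence "a1 = b1" "a2 = b2" by (simp_all add: sum_power2_eq_zero_iff)
    thus False using assms(3) unfolding a1_a2_b1_b2_def by (simp add: complex_eq_iff)
  qed
  hence "(1 - c)^2 > 0" by simp
  hence "(Im (cnj a * b))^2 < cmod (\<i> * (a - b))^2" unfolding sq1 sq2 by (simp add: power2_eq_square algebra_simps)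
  thus ?thesis by (metis abs_le_square_iff linorder_not_le norm_ge_zero abs_of_nonneg)
qed

lemma GEO:
  assumes "cmod a = 1" "cmod b = 1" "a \<noteq> b"
  shows "hyp_line_joining a b X \<longleftrightarrow> X = geo a b"
proof
  assume "hyp_line_joining a b X"
  then obtain C where C: "orth_gcircle C" "a \<in> C" "b \<in> C" "X = C \<inter> disk"
    unfolding hyp_line_joining_def by blast
  obtain A W where AW: "cmod W > \<bar>A\<bar>" "C = {z. hform A W A z = 0}" using orth_to_form[OF C(1)] by blast
  obtain s where s: "A = s * Im (cnj a * b)" "W = of_real s * (\<i> * (a - b))"
    using form_prop[OF assms, of A W] AW C by blast
  have "s \<noteq> 0" using AW(1) s by auto
  have "hform A W A z = 0 \<longleftrightarrow> hform (Im (cnj a * b)) (\<i> * (a - b)) (Im (cnj a * b)) z = 0" for z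
    unfolding s hform_scale using \<open>s \<noteq> 0\<close> by simp
  thus "X = geo a b" unfolding geo_def C(4) AW(2) by auto
next
  assume X: "X = geo a b"
  let ?C = "{z. hform (Im (cnj a * b)) (\<i> * (a - b)) (Im (cnj a * b)) z = 0}"
  have "orth_gcircle ?C" by (rule form_to_orth[OF geo_W[OF assms]])
  moreover have "a \<in> ?C" "b \<in> ?C" using geo_form_at[OF assms(1,2)] by auto
  moreover have "X = ?C \<inter> disk" unfolding X geo_def by auto
  ultimately show "hyp_line_joining a b X" unfolding hyp_line_joining_def by blast
qed




lemma hyp_line_endpoints:
  assumes "hyp_line L"
  shows "\<exists>e1 e2. cmod e1 = 1 \<and> cmod e2 = 1 \<and> e1 \<noteq> e2 \<and> L = geo e1 e2"
proof -
  obtain C where C: "orth_gcircle C" "L = C \<inter> disk" using assms unfolding hyp_line_def by blast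
  obtain A W where AW: "cmod W > \<bar>A\<bar>" "C = {z. hform A W A z = 0}" using orth_to_form[OF C(1)] by blast
  have W0: "W \<noteq> 0" using AW(1) by auto
  have Wsq: "cmod W ^ 2 > A^2" using power_strict_mono[OF AW(1) abs_ge_zero, of 2] by simp
  define s where "s = sqrt (cmod W ^ 2 - A^2)"
  have s0: "s > 0" unfolding s_def using Wsq by simp
  have ss: "s^2 = cmod W ^ 2 - A^2" unfolding s_def using Wsq by simp
  define e where "e = (\<lambda>t::real. Complex A t * W / of_real (cmod W ^ 2))"
  have e_unit: "cmod (e t) = 1" if "t^2 = s^2" for t
  proof -
    have "cmod (Complex A t) = sqrt (A^2 + t^2)" by (simp add: cmod_def)
    also have "\<dots> = cmod W" using that ss by simp
    finally have "cmod (Complex A t) = cmod W" .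
    thus ?thesis unfolding e_def using W0 by (simp add: norm_mult norm_divide power2_eq_square)
  qed
  have e_form: "hform A W A (e t) = 0" if "t^2 = s^2" for t
  proof -
    have "cnj W * e t = Complex A t" unfolding e_def using W0
      by (simp add: complex_norm_square[symmetric] field_simps)
    hence "Re (cnj W * e t) = A" by simp
    thus ?thesis unfolding hform_def using e_unit[OF that] by simp
  qed
  have ne: "e s \<noteq> e (-s)"
  proof
    assume "e s = e (-s)"
    hence "Complex A s * W = Complex A (-s) * W" unfolding e_def using W0 by simp
    hence "Complex A s = Complex A (-s)" using W0 by simp
    thus False using s0 by simp
  qed
  have u1: "cmod (e s) = 1" and u2: "cmod (e (-s)) = 1" using e_unit by auto
  have "hyp_line_joining (e s) (e (-s)) L" unfolding hyp_line_joining_def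
    using C AW e_form[of s] e_form[of "-s"] by auto
  hence "L = geo (e s) (e (-s))" using GEO[OF u1 u2 ne] by blast
  thus ?thesis using u1 u2 ne by blast
qed

lemma pullback_general:
  fixes A D :: real and W kap e1 e2 z :: complex
  shows "A * cmod kap ^ 2 * cmod (z - e2) ^ 2 - 2 * Re (cnj W * kap * (z - e2) * cnj (z - e1)) + D * cmod (z - e1) ^ 2
    = (A * cmod kap ^ 2 - 2 * Re (cnj W * kap) + D) * cmod z ^ 2
      - 2 * Re (cnj (of_real (A * cmod kap ^ 2) * e2 - W * cnj kap * e1 - cnj W * kap * e2 + of_real D * e1) * z)
      + (A * cmod kap ^ 2 * cmod e2 ^ 2 - 2 * Re (cnj W * kap * e2 * cnj e1) + D * cmod e1 ^ 2)"
  unfolding cmod_sq by (simp add: algebra_simps power2_eq_square)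




lemma unit_cnj: "cmod a = 1 \<Longrightarrow> a * cnj a = 1"
  by (metis complex_norm_square mult.commute of_real_1 power_one)

locale hp =
  fixes e1 e2 :: complex and rho :: real
  assumes e1: "cmod e1 = 1" and e2: "cmod e2 = 1" and ne: "e1 \<noteq> e2" and rho: "rho > 0"
begin

definition "kk = 1 - Re (e1 * cnj e2)"
definition "kap = of_real rho * (e1 * cnj e2 - 1)"
definition "F z = kap * (z - e2) / (z - e1)"
definition "G Z = (e1 * Z - kap * e2) / (Z - kap)"

lemma u1: "e1 * cnj e1 = 1" using unit_cnj[OF e1] .
lemma u2: "e2 * cnj e2 = 1" using unit_cnj[OF e2] .

lemma diff_sq: "cmod (e1 - e2)^2 = 2 * kk"
  using unit_sq[OF e1] unit_sq[OF e2] unfolding kk_def cmod_sq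
  by (simp add: power2_eq_square algebra_simps)

lemma kk_pos: "kk > 0"
proof -
  have "cmod (e1 - e2) > 0" using ne by simp
  hence "cmod (e1 - e2)^2 > 0" by simp
  thus ?thesis using diff_sq by simp
qed

lemma kap_eq: "kap = of_real rho * (e1 - e2) * cnj e2"
  unfolding kap_def using u2 by (simp add: algebra_simps)

lemma kap_sq: "cmod kap ^ 2 = 2 * rho^2 * kk"
proof -
  have "cmod kap = rho * cmod (e1 - e2)" unfolding kap_eq using rho e2 by (simp add: norm_mult)
  hence "cmod kap ^ 2 = rho^2 * cmod (e1 - e2)^2" by (simp add: power_mult_distrib)
  thus ?thesis using diff_sq by simp
qed

lemma Re_kap: "Re kap = - rho * kk"
  unfolding kap_def kk_def by (simp add: algebra_simps)

lemma kap_ne: "kap \<noteq> 0"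
  using Re_kap kk_pos rho by (metis mult_pos_pos neg_0_equal_iff_equal zero_complex.simps(1) mult_minus_left less_irrefl)

lemma key_re: "Re (kap * (z - e2) * cnj (z - e1)) = rho * kk * (1 - cmod z ^ 2)"
proof -
  have "kap * (z - e2) * cnj (z - e1) = of_real rho * ((e1 * cnj e2 - 1) * (z * cnj z) - cnj e2 * z - e1 * cnj z + 1 + z * cnj e1 + e2 * cnj z - e2 * cnj e1)"
    unfolding kap_def complex_cnj_diff using u1 u2 by algebra
  moreover have "z * cnj z = of_real (cmod z ^ 2)" by (rule complex_norm_square[symmetric])
  ultimately have "kap * (z - e2) * cnj (z - e1) = of_real rho * ((e1 * cnj e2 - 1) * of_real (cmod z ^ 2) - cnj e2 * z - e1 * cnj z + 1 + z * cnj e1 + e2 * cnj z - e2 * cnj e1)"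
    by simp
  note eq = this
  have "Re (kap * (z - e2) * cnj (z - e1)) = rho * ((Re (e1 * cnj e2) - 1) * cmod z ^ 2 + 1 - Re (e2 * cnj e1))
     + rho * (Re (z * cnj e1) - Re (e1 * cnj z) + Re (e2 * cnj z) - Re (cnj e2 * z))"
    unfolding eq by (simp add: algebra_simps)
  also have "\<dots> = rho * kk * (1 - cmod z ^ 2)"
    unfolding kk_def by (simp add: algebra_simps)
  finally show ?thesis .
qed

lemma F_re: "z \<noteq> e1 \<Longrightarrow> Re (F z) * cmod (z - e1)^2 = rho * kk * (1 - cmod z ^ 2)"
proof -
  assume z: "z \<noteq> e1"
  have nsq: "of_real (cmod (z - e1)^2) = (z - e1) * cnj (z - e1)" by (rule complex_norm_square)
  have "F z * ((z - e1) * cnj (z - e1)) = kap * (z - e2) * cnj (z - e1)"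
    unfolding F_def using z by (simp add: field_simps)
  hence "F z * of_real (cmod (z - e1)^2) = kap * (z - e2) * cnj (z - e1)" unfolding nsq .
  hence "Re (F z * of_real (cmod (z - e1)^2)) = rho * kk * (1 - cmod z ^ 2)" using key_re by simp
  thus ?thesis by simp
qed

lemma F_diff: "z1 \<noteq> e1 \<Longrightarrow> z2 \<noteq> e1 \<Longrightarrow> F z1 - F z2 = kap * (e2 - e1) * (z1 - z2) / ((z1 - e1) * (z2 - e1))"
  unfolding F_def by (simp add: field_simps)

lemma F_inj: "z1 \<noteq> e1 \<Longrightarrow> z2 \<noteq> e1 \<Longrightarrow> F z1 = F z2 \<Longrightarrow> z1 = z2"
  using F_diff[of z1 z2] kap_ne ne by auto

lemma disk_ne: "z \<in> disk \<Longrightarrow> z \<noteq> e1"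
  using e1 unfolding disk_def by auto

lemma F_disk: "z \<in> disk \<Longrightarrow> Re (F z) > 0"
proof -
  assume z: "z \<in> disk"
  have "cmod z < 1" using z unfolding disk_def by simp
  hence "cmod z ^ 2 < 1" by (simp add: power_less_one_iff)
  hence "rho * kk * (1 - cmod z ^ 2) > 0" using rho kk_pos by simp
  moreover have "cmod (z - e1)^2 > 0" using disk_ne[OF z] by simp
  ultimately show ?thesis using F_re[OF disk_ne[OF z]] by (metis zero_less_mult_pos2)
qed

lemma F_circ: "cmod a = 1 \<Longrightarrow> a \<noteq> e1 \<Longrightarrow> Re (F a) = 0"
  using F_re[of a] by simp

lemma Z_ne_kap: "Re Z \<ge> 0 \<Longrightarrow> Z \<noteq> kap"
  using Re_kap rho kk_pos by (metis mult_pos_pos neg_less_0_iff_less mult_minus_left not_le)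

lemma G_e1: "Re Z \<ge> 0 \<Longrightarrow> G Z - e1 = kap * (e1 - e2) / (Z - kap)"
  using Z_ne_kap[of Z] unfolding G_def by (simp add: field_simps)

lemma G_ne: "Re Z \<ge> 0 \<Longrightarrow> G Z \<noteq> e1"
  using G_e1[of Z] kap_ne ne Z_ne_kap[of Z] by auto

lemma FG: "Re Z \<ge> 0 \<Longrightarrow> F (G Z) = Z"
proof -
  assume Z: "Re Z \<ge> 0"
  have k: "Z - kap \<noteq> 0" using Z_ne_kap[OF Z] by simp
  have g2: "G Z - e2 = Z * (e1 - e2) / (Z - kap)"
    using k unfolding G_def by (simp add: field_simps)
  have "F (G Z) = kap * (Z * (e1 - e2) / (Z - kap)) / (kap * (e1 - e2) / (Z - kap))"
    unfolding F_def g2 G_e1[OF Z] ..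
  also have "\<dots> = (Z * (kap * (e1 - e2))) / (kap * (e1 - e2))" using k by (simp add: ac_simps)
  also have "\<dots> = Z" using kap_ne ne by simp
  finally show ?thesis .
qed

lemma G_disk: "Re Z > 0 \<Longrightarrow> G Z \<in> disk"
proof -
  assume Z: "Re Z > 0"
  have "Re (F (G Z)) * cmod (G Z - e1)^2 = rho * kk * (1 - cmod (G Z) ^ 2)" using F_re G_ne Z by simp
  hence "Re Z * cmod (G Z - e1)^2 = rho * kk * (1 - cmod (G Z) ^ 2)" using FG Z by simp
  moreover have "Re Z * cmod (G Z - e1)^2 > 0" using Z G_ne[of Z] by simp
  ultimately have "1 - cmod (G Z) ^ 2 > 0" using rho kk_pos by (metis zero_less_mult_pos mult_pos_pos)
  hence "cmod (G Z) ^ 2 < 1" by simp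
  thus ?thesis unfolding disk_def by (simp add: power_less_one_iff)
qed

lemma G_circ: "Re Z = 0 \<Longrightarrow> cmod (G Z) = 1"
proof -
  assume Z: "Re Z = 0"
  have "Re (F (G Z)) * cmod (G Z - e1)^2 = rho * kk * (1 - cmod (G Z) ^ 2)" using F_re G_ne Z by simp
  hence "rho * kk * (1 - cmod (G Z) ^ 2) = 0" using FG Z by simp
  hence "cmod (G Z) ^ 2 = 1" using rho kk_pos by simp
  thus ?thesis using norm_ge_zero[of "G Z"] by (auto simp: power2_eq_1_iff)
qed

lemma aux_frac: "(N1::real) > 0 \<Longrightarrow> N2 > 0 \<Longrightarrow> X > 0 \<Longrightarrow> Y > 0 \<Longrightarrow> r > 0 \<Longrightarrow>
  2 * d / (X * Y) = (4 * r^2 * d / (N1 * N2)) / (2 * (r * X / N1) * (r * Y / N2))"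
  by (simp add: field_simps power2_eq_square)

lemma dist_F:
  assumes "z1 \<in> disk" "z2 \<in> disk"
  shows "2 * cmod (z1 - z2)^2 / ((1 - cmod z1 ^ 2) * (1 - cmod z2 ^ 2))
       = cmod (F z1 - F z2)^2 / (2 * Re (F z1) * Re (F z2))"
proof -
  have n1: "z1 \<noteq> e1" and n2: "z2 \<noteq> e1" using disk_ne assms by auto
  define N1 N2 where "N1 = cmod (z1 - e1)^2" "N2 = cmod (z2 - e1)^2"
  have N: "N1 > 0" "N2 > 0" unfolding N1_N2_def using n1 n2 by auto
  have r1: "Re (F z1) = rho * kk * (1 - cmod z1 ^ 2) / N1" using F_re[OF n1] N unfolding N1_N2_def by (simp add: eq_divide_eq)
  have r2: "Re (F z2) = rho * kk * (1 - cmod z2 ^ 2) / N2" using F_re[OF n2] N unfolding N1_N2_def by (simp add: eq_divide_eq)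
  have "cmod (F z1 - F z2) ^ 2 = cmod kap ^ 2 * cmod (e2 - e1) ^ 2 * cmod (z1 - z2) ^ 2 / (N1 * N2)"
    unfolding F_diff[OF n1 n2] N1_N2_def by (simp add: norm_mult norm_divide power_mult_distrib power_divide)
  also have "\<dots> = 4 * rho^2 * kk^2 * cmod (z1 - z2) ^ 2 / (N1 * N2)"
    using diff_sq kap_sq by (simp add: norm_minus_commute power2_eq_square)
  finally have d: "cmod (F z1 - F z2) ^ 2 = 4 * rho^2 * kk^2 * cmod (z1 - z2) ^ 2 / (N1 * N2)" .
  have p1: "1 - cmod z1 ^ 2 > 0" "1 - cmod z2 ^ 2 > 0" using assms unfolding disk_def by (simp_all add: power_less_one_iff)
  have "rho * kk > 0" using rho kk_pos by simp
  from aux_frac[OF N p1 this, of "cmod (z1 - z2)^2"]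
  show ?thesis unfolding d r1 r2 by (simp add: power_mult_distrib mult.assoc)
qed

definition "pbA A m D = A * cmod kap ^ 2 - 2 * m * Im kap + D"
definition "pbW A m D = of_real (A * cmod kap ^ 2) * e2 - \<i> * of_real m * cnj kap * e1 + \<i> * of_real m * kap * e2 + of_real D * e1"

lemma pb_const: "Re (cnj (\<i> * of_real m) * kap * e2 * cnj e1) = m * Im kap"
proof -
  have "kap * e2 * cnj e1 = of_real rho * (1 - e2 * cnj e1)" unfolding kap_def using u1 u2 by algebra
  hence "Re (cnj (\<i> * of_real m) * kap * e2 * cnj e1) = Re (cnj (\<i> * of_real m) * (of_real rho * (1 - e2 * cnj e1)))"
    by (simp add: mult.assoc)
  also have "\<dots> = m * rho * Im (e1 * cnj e2)" by simp
  also have "\<dots> = m * Im kap" unfolding kap_def by simp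
  finally show ?thesis .
qed

lemma pullback_poly: "A * cmod kap ^ 2 * cmod (z - e2) ^ 2 - 2 * Re (cnj (\<i> * of_real m) * kap * (z - e2) * cnj (z - e1)) + D * cmod (z - e1) ^ 2
   = hform (pbA A m D) (pbW A m D) (pbA A m D) z"
proof -
  have "A * cmod kap ^ 2 * cmod (z - e2) ^ 2 - 2 * Re (cnj (\<i> * of_real m) * kap * (z - e2) * cnj (z - e1)) + D * cmod (z - e1) ^ 2
    = (A * cmod kap ^ 2 - 2 * Re (cnj (\<i> * of_real m) * kap) + D) * cmod z ^ 2
      - 2 * Re (cnj (of_real (A * cmod kap ^ 2) * e2 - (\<i> * of_real m) * cnj kap * e1 - cnj (\<i> * of_real m) * kap * e2 + of_real D * e1) * z)
      + (A * cmod kap ^ 2 * cmod e2 ^ 2 - 2 * Re (cnj (\<i> * of_real m) * kap * e2 * cnj e1) + D * cmod e1 ^ 2)"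
    by (rule pullback_general)
  also have "\<dots> = hform (pbA A m D) (pbW A m D) (pbA A m D) z"
    unfolding hform_def pbA_def pbW_def pb_const e1 e2 by simp
  finally show ?thesis .
qed

lemma pullback: "z \<noteq> e1 \<Longrightarrow> hform A (\<i> * of_real m) D (F z) * cmod (z - e1) ^ 2 = hform (pbA A m D) (pbW A m D) (pbA A m D) z"
proof -
  assume z: "z \<noteq> e1"
  have nsq: "of_real (cmod (z - e1)^2) = (z - e1) * cnj (z - e1)" by (rule complex_norm_square)
  have fz: "F z * ((z - e1) * cnj (z - e1)) = kap * (z - e2) * cnj (z - e1)"
    unfolding F_def using z by (simp add: field_simps)
  have "cmod (F z) * cmod (z - e1) = cmod kap * cmod (z - e2)" unfolding F_def using z by (simp add: norm_mult norm_divide)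
  hence a: "cmod (F z) ^ 2 * cmod (z - e1) ^ 2 = cmod kap ^ 2 * cmod (z - e2) ^ 2"
    by (metis power_mult_distrib)
  have b: "Re (cnj (\<i> * of_real m) * F z) * cmod (z - e1) ^ 2 = Re (cnj (\<i> * of_real m) * kap * (z - e2) * cnj (z - e1))"
  proof -
    have "Re (cnj (\<i> * of_real m) * F z) * cmod (z - e1) ^ 2 = Re (cnj (\<i> * of_real m) * F z * of_real (cmod (z - e1) ^ 2))"
      by simp
    also have "\<dots> = Re (cnj (\<i> * of_real m) * (F z * ((z - e1) * cnj (z - e1))))" unfolding nsq by (simp add: mult.assoc)
    also have "\<dots> = Re (cnj (\<i> * of_real m) * kap * (z - e2) * cnj (z - e1))" unfolding fz by (simp add: mult.assoc)
    finally show ?thesis .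
  qed
  have "hform A (\<i> * of_real m) D (F z) * cmod (z - e1) ^ 2 =
    A * (cmod (F z) ^ 2 * cmod (z - e1) ^ 2) - 2 * (Re (cnj (\<i> * of_real m) * F z) * cmod (z - e1) ^ 2) + D * cmod (z - e1) ^ 2"
    unfolding hform_def by (simp add: algebra_simps)
  also have "\<dots> = hform (pbA A m D) (pbW A m D) (pbA A m D) z" unfolding a b pullback_poly[symmetric] by simp
  finally show ?thesis .
qed

lemma pullback_e1: "hform (pbA 0 m D) (pbW 0 m D) (pbA 0 m D) e1 = 0"
  using pullback_poly[where A=0 and z=e1 and m=m and D=D] by simp

end



lemma geo_sym: "geo a b = geo b a"
proof -
  have "hform (Im (cnj b * a)) (\<i> * (b - a)) (Im (cnj b * a)) z = (-1) * hform (Im (cnj a * b)) (\<i> * (a - b)) (Im (cnj a * b)) z" for z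
  proof -
    have "hform (Im (cnj b * a)) (\<i> * (b - a)) (Im (cnj b * a)) z = hform ((-1) * Im (cnj a * b)) (of_real (-1) * (\<i> * (a - b))) ((-1) * Im (cnj a * b)) z"
      by (simp add: algebra_simps)
    thus ?thesis by (simp only: hform_scale)
  qed
  thus ?thesis unfolding geo_def by auto
qed

lemma hform_half: "hform A (\<i> * of_real m) D Z = A * cmod Z ^ 2 - 2 * m * Im Z + D"
  by (simp add: hform_def)

context hp begin

lemma geo_transfer:
  assumes a: "cmod a = 1" and b: "cmod b = 1" and ab: "a \<noteq> b"
    and va: "hform (pbA A m D) (pbW A m D) (pbA A m D) a = 0"
    and vb: "hform (pbA A m D) (pbW A m D) (pbA A m D) b = 0"
    and nd: "Re Z0 > 0" "hform A (\<i> * of_real m) D Z0 \<noteq> 0"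
  shows "geo a b = {z \<in> disk. hform A (\<i> * of_real m) D (F z) = 0}"
proof -
  obtain s where s: "pbA A m D = s * Im (cnj a * b)" "pbW A m D = of_real s * (\<i> * (a - b))"
    using form_prop[OF a b ab va vb] by blast
  have s0: "s \<noteq> 0"
  proof
    assume "s = 0"
    hence "hform (pbA A m D) (pbW A m D) (pbA A m D) z = 0" for z using s by (simp add: hform_def)
    hence "hform A (\<i> * of_real m) D (F (G Z0)) * cmod (G Z0 - e1) ^ 2 = 0"
      using pullback[OF G_ne] nd(1) by simp
    hence "hform A (\<i> * of_real m) D Z0 * cmod (G Z0 - e1) ^ 2 = 0" using FG nd(1) by simp
    moreover have "cmod (G Z0 - e1) ^ 2 \<noteq> 0" using G_ne nd(1) by simp
    ultimately show False using nd(2) by simp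
  qed
  have "hform A (\<i> * of_real m) D (F z) = 0 \<longleftrightarrow> hform (Im (cnj a * b)) (\<i> * (a - b)) (Im (cnj a * b)) z = 0"
    if z: "z \<in> disk" for z
  proof -
    have ne1: "z \<noteq> e1" using disk_ne z by simp
    have "hform A (\<i> * of_real m) D (F z) = 0 \<longleftrightarrow> hform A (\<i> * of_real m) D (F z) * cmod (z - e1) ^ 2 = 0"
      using ne1 by simp
    also have "\<dots> \<longleftrightarrow> hform (pbA A m D) (pbW A m D) (pbA A m D) z = 0" using pullback[OF ne1] by simp
    also have "\<dots> \<longleftrightarrow> s * hform (Im (cnj a * b)) (\<i> * (a - b)) (Im (cnj a * b)) z = 0"
      unfolding s hform_scale ..
    also have "\<dots> \<longleftrightarrow> hform (Im (cnj a * b)) (\<i> * (a - b)) (Im (cnj a * b)) z = 0" using s0 by simp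
    finally show ?thesis .
  qed
  thus ?thesis unfolding geo_def by auto
qed

lemma F_circ_eq: "cmod a = 1 \<Longrightarrow> a \<noteq> e1 \<Longrightarrow> F a = \<i> * of_real (Im (F a))"
  using F_circ[of a] by (simp add: complex_eq_iff)

lemma geo_semi:
  assumes a: "cmod a = 1" and b: "cmod b = 1" and ab: "a \<noteq> b" and a1: "a \<noteq> e1" and b1: "b \<noteq> e1"
  shows "geo a b = {z \<in> disk. cmod (F z) ^ 2 - (Im (F a) + Im (F b)) * Im (F z) + Im (F a) * Im (F b) = 0}"
proof -
  define \<alpha> \<beta> where "\<alpha> = Im (F a)" "\<beta> = Im (F b)"
  define m where "m = (\<alpha> + \<beta>) / 2"
  have H: "hform 1 (\<i> * of_real m) (\<alpha> * \<beta>) Z = cmod Z ^ 2 - (\<alpha> + \<beta>) * Im Z + \<alpha> * \<beta>" for Z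
    unfolding hform_half m_def by simp
  have Fa: "cmod (F a) ^ 2 = \<alpha>^2" using F_circ[OF a a1] unfolding \<alpha>_\<beta>_def cmod_sq by simp
  have Fb: "cmod (F b) ^ 2 = \<beta>^2" using F_circ[OF b b1] unfolding \<alpha>_\<beta>_def cmod_sq by simp
  have va: "hform (pbA 1 m (\<alpha>*\<beta>)) (pbW 1 m (\<alpha>*\<beta>)) (pbA 1 m (\<alpha>*\<beta>)) a = 0"
    using pullback[OF a1, of 1 m "\<alpha>*\<beta>"] unfolding H Fa \<alpha>_\<beta>_def[symmetric] by (simp add: power2_eq_square algebra_simps)
  have vb: "hform (pbA 1 m (\<alpha>*\<beta>)) (pbW 1 m (\<alpha>*\<beta>)) (pbA 1 m (\<alpha>*\<beta>)) b = 0"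
    using pullback[OF b1, of 1 m "\<alpha>*\<beta>"] unfolding H Fb \<alpha>_\<beta>_def[symmetric] by (simp add: power2_eq_square algebra_simps)
  define t where "t = sqrt (\<bar>\<alpha>*\<beta>\<bar> + 1)"
  have t0: "t > 0" unfolding t_def by (simp add: add_nonneg_pos)
  have tt: "t^2 = \<bar>\<alpha>*\<beta>\<bar> + 1" unfolding t_def by simp
  have nd: "hform 1 (\<i> * of_real m) (\<alpha> * \<beta>) (of_real t) \<noteq> 0"
    unfolding H using tt by (simp add: cmod_sq)
  have g: "geo a b = {z \<in> disk. hform 1 (\<i> * of_real m) (\<alpha>*\<beta>) (F z) = 0}"
    by (rule geo_transfer[OF a b ab va vb _ nd]) (use t0 in simp)
  show ?thesis using g[unfolded H] unfolding \<alpha>_\<beta>_def .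
qed

lemma geo_ray:
  assumes b: "cmod b = 1" and b1: "b \<noteq> e1"
  shows "geo e1 b = {z \<in> disk. Im (F z) = Im (F b)}"
proof -
  define \<beta> where "\<beta> = Im (F b)"
  have H: "hform 0 (\<i> * of_real (-1/2)) (-\<beta>) Z = Im Z - \<beta>" for Z
    unfolding hform_half by simp
  have va: "hform (pbA 0 (-1/2) (-\<beta>)) (pbW 0 (-1/2) (-\<beta>)) (pbA 0 (-1/2) (-\<beta>)) e1 = 0"
    by (rule pullback_e1)
  have vb: "hform (pbA 0 (-1/2) (-\<beta>)) (pbW 0 (-1/2) (-\<beta>)) (pbA 0 (-1/2) (-\<beta>)) b = 0"
  proof -
    have "hform 0 (\<i> * of_real (-1/2)) (-\<beta>) (F b) = 0" using H[of "F b"] by (simp add: \<beta>_def)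
    thus ?thesis using pullback[OF b1, of 0 "-1/2" "-\<beta>"] by simp
  qed
  have nd: "hform 0 (\<i> * of_real (-1/2)) (-\<beta>) (Complex 1 (\<beta>+1)) \<noteq> 0" unfolding H by simp
  have "geo e1 b = {z \<in> disk. hform 0 (\<i> * of_real (-1/2)) (-\<beta>) (F z) = 0}"
    by (rule geo_transfer[OF e1 b b1[symmetric] va vb _ nd]) simp
  from this[unfolded H] show ?thesis unfolding \<beta>_def by simp
qed

end



context hp begin

definition "Gi x = G (\<i> * of_real x)"

lemma Gi_circ: "cmod (Gi x) = 1" unfolding Gi_def by (rule G_circ) simp
lemma Gi_ne: "Gi x \<noteq> e1" unfolding Gi_def by (rule G_ne) simp
lemma F_Gi: "F (Gi x) = \<i> * of_real x" unfolding Gi_def by (rule FG) simp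
lemma Im_F_Gi: "Im (F (Gi x)) = x" using F_Gi by simp
lemma Gi_inj: "Gi x = Gi y \<longleftrightarrow> x = y" using Im_F_Gi by metis
lemma Gi_F: "cmod a = 1 \<Longrightarrow> a \<noteq> e1 \<Longrightarrow> Gi (Im (F a)) = a"
  using F_inj[OF Gi_ne, of a] F_Gi F_circ_eq by metis

lemma F_real: "z \<in> disk \<Longrightarrow> Im (F z) = 0 \<Longrightarrow> F z = of_real (Re (F z))"
  by (simp add: complex_eq_iff)

lemma vertices_ne_e1:
  assumes P: "P \<in> disk" "Im (F P) = 0" and Q: "Q \<in> disk" "Im (F Q) = 0"
    and abc: "cmod a = 1" "cmod b = 1" "cmod c = 1" "a \<noteq> b" "b \<noteq> c" "a \<noteq> c"
    and PQ: "P \<in> geo a b" "Q \<in> geo b c"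
  shows "a \<noteq> e1 \<and> b \<noteq> e1 \<and> c \<noteq> e1"
proof -
  have pP: "Re (F P) > 0" "Re (F Q) > 0" using F_disk P Q by auto
  have cP: "cmod (F P) ^ 2 > 0" "cmod (F Q) ^ 2 > 0" using pP by (auto simp: complex_eq_iff)
  have "a \<noteq> e1"
  proof
    assume a: "a = e1"
    have "P \<in> geo e1 b" using PQ a by simp
    hence "Im (F b) = 0" using geo_ray[OF abc(2)] abc(4) a P by auto
    moreover have "Q \<in> geo b c" by fact
    hence "cmod (F Q) ^ 2 - (Im (F b) + Im (F c)) * Im (F Q) + Im (F b) * Im (F c) = 0"
      using geo_semi[OF abc(2,3,5)] abc a by auto
    ultimately show False using Q cP by simp
  qed
  moreover have "b \<noteq> e1"
  proof
    assume b: "b = e1"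
    have "P \<in> geo e1 a" using PQ b geo_sym by metis
    hence "Im (F a) = 0" using geo_ray[OF abc(1)] abc(4) b P by auto
    moreover have "Q \<in> geo e1 c" using PQ b by simp
    hence "Im (F c) = 0" using geo_ray[OF abc(3)] abc(5) b Q by auto
    ultimately have "Gi (Im (F a)) = Gi (Im (F c))" by simp
    hence "a = c" using Gi_F abc b by metis
    thus False using abc by simp
  qed
  moreover have "c \<noteq> e1"
  proof
    assume c: "c = e1"
    have "Q \<in> geo e1 b" using PQ c geo_sym by metis
    hence "Im (F b) = 0" using geo_ray[OF abc(2)] abc(5) c Q by auto
    moreover have "P \<in> geo a b" by fact
    hence "cmod (F P) ^ 2 - (Im (F a) + Im (F b)) * Im (F P) + Im (F a) * Im (F b) = 0"
      using geo_semi[OF abc(1,2,4)] abc c by auto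
    ultimately show False using P cP by simp
  qed
  ultimately show ?thesis by blast
qed

definition "trip p q t = {Gi (-p*t/q), Gi (p*q/t), Gi (-q*t/p)}"

lemma circ_char:
  assumes P: "P \<in> disk" "Im (F P) = 0" and Q: "Q \<in> disk" "Im (F Q) = 0" and R: "R \<in> disk"
    and pq: "Re (F P) \<noteq> Re (F Q)"
  shows "circumscribing_ideal_triangle T P Q R \<longleftrightarrow>
    (\<exists>t. t^2 + 2 * (((Re (F P))^2 + (Re (F Q))^2) / (2 * Re (F P) * Re (F Q)) * Im (F R)) * t + cmod (F R)^2 = 0
       \<and> T = trip (Re (F P)) (Re (F Q)) t)"
  (is "?L \<longleftrightarrow> ?R")
proof -
  define p q y W where "p = Re (F P)" "q = Re (F Q)" "y = Im (F R)" "W = cmod (F R)^2"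
  define c0 where "c0 = (p^2 + q^2) / (2*p*q)"
  have p0: "p > 0" and q0: "q > 0" unfolding p_q_y_W_def using F_disk P Q by auto
  have FP2: "cmod (F P)^2 = p^2" using P(2) unfolding p_q_y_W_def cmod_sq by simp
  have FQ2: "cmod (F Q)^2 = q^2" using Q(2) unfolding p_q_y_W_def cmod_sq by simp
  have "Re (F R) > 0" using F_disk R by auto
  hence W0: "W > 0" unfolding p_q_y_W_def by (auto simp: complex_eq_iff)
  have "?L \<longleftrightarrow> (\<exists>t. t^2 + 2 * (c0 * y) * t + W = 0 \<and> T = trip p q t)"
  proof
    assume ?L
    then obtain a b c where T: "T = {a, b, c}" and abc: "a \<noteq> b" "b \<noteq> c" "a \<noteq> c"
      and circ: "cmod a = 1" "cmod b = 1" "cmod c = 1"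
      and lines: "\<exists>Lab Lbc Lca. hyp_line_joining a b Lab \<and> hyp_line_joining b c Lbc \<and>
           hyp_line_joining c a Lca \<and> P \<in> Lab \<and> Q \<in> Lbc \<and> R \<in> Lca"
      unfolding circumscribing_ideal_triangle_def circle_at_infinity_def mem_Collect_eq by blast
    have mem: "P \<in> geo a b" "Q \<in> geo b c" "R \<in> geo c a"
      using lines GEO[OF circ(1,2) abc(1)] GEO[OF circ(2,3) abc(2)] GEO[OF circ(3,1) abc(3)[symmetric]] by auto
    have ne1: "a \<noteq> e1" "b \<noteq> e1" "c \<noteq> e1"
      using vertices_ne_e1[OF P Q circ abc mem(1,2)] by auto
    define \<alpha> \<beta> \<gamma> where "\<alpha> = Im (F a)" "\<beta> = Im (F b)" "\<gamma> = Im (F c)"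
    have eP: "p^2 + \<alpha> * \<beta> = 0"
      using mem(1) geo_semi[OF circ(1,2) abc(1) ne1(1,2)] P(2) FP2 unfolding \<alpha>_\<beta>_\<gamma>_def by simp
    have eQ: "q^2 + \<beta> * \<gamma> = 0"
      using mem(2) geo_semi[OF circ(2,3) abc(2) ne1(2,3)] Q(2) FQ2 unfolding \<alpha>_\<beta>_\<gamma>_def by simp
    have eR: "W - (\<gamma> + \<alpha>) * y + \<gamma> * \<alpha> = 0"
      using mem(3) geo_semi[OF circ(3,1) abc(3)[symmetric] ne1(3,1)] unfolding \<alpha>_\<beta>_\<gamma>_def p_q_y_W_def by simp
    have b0: "\<beta> \<noteq> 0" using eP p0 by auto
    define t where "t = p * q / \<beta>"
    have t0: "t \<noteq> 0" unfolding t_def using b0 p0 q0 by simp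
    have ea: "\<alpha> = -p*t/q" unfolding t_def using eP b0 q0 by (simp add: field_simps power2_eq_square)
    have ec: "\<gamma> = -q*t/p" unfolding t_def using eQ b0 p0 by (simp add: field_simps power2_eq_square)
    have eb: "\<beta> = p*q/t" unfolding t_def using b0 p0 q0 by simp
    have "t^2 + 2 * (c0 * y) * t + W = W - (\<gamma> + \<alpha>) * y + \<gamma> * \<alpha>"
      unfolding ea ec c0_def using p0 q0 by (simp add: field_simps power2_eq_square)
    hence root: "t^2 + 2 * (c0 * y) * t + W = 0" using eR by simp
    have "T = trip p q t" unfolding T trip_def
      using Gi_F[OF circ(1) ne1(1)] Gi_F[OF circ(2) ne1(2)] Gi_F[OF circ(3) ne1(3)]
      unfolding \<alpha>_\<beta>_\<gamma>_def[symmetric] ea eb ec by simp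
    thus "\<exists>t. t^2 + 2 * (c0 * y) * t + W = 0 \<and> T = trip p q t" using root by blast
  next
    assume "\<exists>t. t^2 + 2 * (c0 * y) * t + W = 0 \<and> T = trip p q t"
    then obtain t where root: "t^2 + 2 * (c0 * y) * t + W = 0" and T: "T = trip p q t" by blast
    have t0: "t \<noteq> 0" using root W0 by auto
    define \<alpha> \<beta> \<gamma> where "\<alpha> = -p*t/q" "\<beta> = p*q/t" "\<gamma> = -q*t/p"
    define a b c where "a = Gi \<alpha>" "b = Gi \<beta>" "c = Gi \<gamma>"
    have ab: "\<alpha> * \<beta> = - (p^2)" unfolding \<alpha>_\<beta>_\<gamma>_def using t0 q0 by (simp add: field_simps power2_eq_square)
    have bc: "\<beta> * \<gamma> = - (q^2)" unfolding \<alpha>_\<beta>_\<gamma>_def using t0 p0 by (simp add: field_simps power2_eq_square)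
    have ac_sum: "\<gamma> + \<alpha> = - 2 * c0 * t" unfolding \<alpha>_\<beta>_\<gamma>_def c0_def using p0 q0 by (simp add: field_simps power2_eq_square)
    have ac_prod: "\<gamma> * \<alpha> = t^2" unfolding \<alpha>_\<beta>_\<gamma>_def using p0 q0 by (simp add: field_simps power2_eq_square)
    have "\<alpha> \<noteq> \<beta>" using ab p0 by (metis neg_less_0_iff_less not_square_less_zero power2_eq_square zero_less_power)
    hence nab: "a \<noteq> b" unfolding a_b_c_def Gi_inj .
    have "\<beta> \<noteq> \<gamma>" using bc q0 by (metis neg_less_0_iff_less not_square_less_zero power2_eq_square zero_less_power)
    hence nbc: "b \<noteq> c" unfolding a_b_c_def Gi_inj .
    have "\<alpha> \<noteq> \<gamma>"
    proof
      assume "\<alpha> = \<gamma>"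
      hence "p * t * p = q * t * q" unfolding \<alpha>_\<beta>_\<gamma>_def using p0 q0 by (simp add: field_simps)
      hence "p * p = q * q" using t0 by simp
      hence "p = q" using p0 q0 by (metis power2_eq_imp_eq power2_eq_square less_imp_le)
      thus False using pq unfolding p_q_y_W_def by simp
    qed
    hence nac: "a \<noteq> c" unfolding a_b_c_def Gi_inj .
    have circ: "cmod a = 1" "cmod b = 1" "cmod c = 1" unfolding a_b_c_def by (rule Gi_circ)+
    have ne1: "a \<noteq> e1" "b \<noteq> e1" "c \<noteq> e1" unfolding a_b_c_def by (rule Gi_ne)+
    have Fa: "Im (F a) = \<alpha>" "Im (F b) = \<beta>" "Im (F c) = \<gamma>" unfolding a_b_c_def by (rule Im_F_Gi)+
    have mP: "P \<in> geo a b" using geo_semi[OF circ(1,2) nab ne1(1,2)] P FP2 ab unfolding Fa by simp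
    have mQ: "Q \<in> geo b c" using geo_semi[OF circ(2,3) nbc ne1(2,3)] Q FQ2 bc unfolding Fa by simp
    have "W - (\<gamma> + \<alpha>) * y + \<gamma> * \<alpha> = 0" using root unfolding ac_sum ac_prod by (simp add: algebra_simps)
    hence mR: "R \<in> geo c a" using geo_semi[OF circ(3,1) nac[symmetric] ne1(3,1)] R unfolding Fa p_q_y_W_def by simp
    have "T = {a, b, c}" unfolding T trip_def a_b_c_def \<alpha>_\<beta>_\<gamma>_def ..
    moreover have "hyp_line_joining a b (geo a b)" "hyp_line_joining b c (geo b c)" "hyp_line_joining c a (geo c a)"
      using GEO[OF circ(1,2) nab] GEO[OF circ(2,3) nbc] GEO[OF circ(3,1) nac[symmetric]] by auto
    ultimately show ?L unfolding circumscribing_ideal_triangle_def circle_at_infinity_def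
      using nab nbc nac circ mP mQ mR by blast
  qed
  thus ?thesis unfolding p_q_y_W_def c0_def by simp
qed

end



lemma quad_roots:
  fixes K W :: real
  assumes W: "W > 0"
  shows "finite {t. t^2 + 2*K*t + W = 0} \<and>
    card {t. t^2 + 2*K*t + W = 0} = (if K^2 < W then 0 else if K^2 = W then 1 else 2)"
proof -
  have eq: "t^2 + 2*K*t + W = 0 \<longleftrightarrow> (t + K)^2 = K^2 - W" for t
    by (simp add: power2_eq_square algebra_simps)
  consider "K^2 < W" | "K^2 = W" | "K^2 > W" by linarith
  thus ?thesis
  proof cases
    case 1
    have "{t. t^2 + 2*K*t + W = 0} = {}" unfolding eq using 1
      by (auto) (metis diff_less_0_iff_less not_square_less_zero power2_eq_square)
    thus ?thesis using 1 by simp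
  next
    case 2
    have "{t. t^2 + 2*K*t + W = 0} = {-K}" unfolding eq using 2 by auto
    thus ?thesis using 2 by simp
  next
    case 3
    define s where "s = sqrt (K^2 - W)"
    have s0: "s > 0" unfolding s_def using 3 by simp
    have ss: "s^2 = K^2 - W" unfolding s_def using 3 by simp
    have "(t + K)^2 = K^2 - W \<longleftrightarrow> t = -K + s \<or> t = -K - s" for t
    proof -
      have "(t + K)^2 = K^2 - W \<longleftrightarrow> (t + K)^2 = s^2" using ss by simp
      also have "\<dots> \<longleftrightarrow> t + K = s \<or> t + K = -s" by (rule power2_eq_iff)
      finally show ?thesis by auto
    qed
    hence "{t. t^2 + 2*K*t + W = 0} = {-K + s, -K - s}" unfolding eq by auto
    moreover have "-K + s \<noteq> -K - s" using s0 by simp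
    ultimately show ?thesis using 3 by simp
  qed
qed

lemma quad_vieta:
  fixes K W t1 t2 :: real
  assumes "t1^2 + 2*K*t1 + W = 0" "t2^2 + 2*K*t2 + W = 0" "t1 \<noteq> t2"
  shows "t1 * t2 = W"
proof -
  have "(t1 - t2) * (t1 + t2 + 2*K) = 0" using assms(1,2) by (simp add: power2_eq_square algebra_simps)
  hence s: "t1 + t2 = -2*K" using assms(3) by simp
  have "t1^2 + (-(t1+t2))*t1 + W = 0" using assms(1) s by simp
  thus ?thesis by (simp add: power2_eq_square algebra_simps)
qed

lemma cosh_eq_nonneg: "x \<ge> 0 \<Longrightarrow> y \<ge> 0 \<Longrightarrow> cosh x = cosh y \<longleftrightarrow> x = (y::real)"
  using cosh_real_nonneg_less_iff[of x y] cosh_real_nonneg_less_iff[of y x] by (metis less_irrefl linorder_neqE)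

lemma delta_compare:
  fixes c0 r :: real
  assumes c0: "c0 > 1" and r: "r \<ge> 1"
  defines "d \<equiv> arcosh c0"
  defines "Dl \<equiv> ln ((exp d + 1) / (exp d - 1))"
  shows "(arcosh r < Dl \<longleftrightarrow> r^2 * (c0^2 - 1) < c0^2) \<and> (arcosh r = Dl \<longleftrightarrow> r^2 * (c0^2 - 1) = c0^2)"
proof -
  define s where "s = sqrt (c0^2 - 1)"
  have c2: "c0^2 > 1" using c0 by (metis less_1_mult power2_eq_square)
  have s0: "s > 0" unfolding s_def using c2 by simp
  have ss: "s^2 = c0^2 - 1" unfolding s_def using c2 by simp
  have E: "exp d = c0 + s" unfolding d_def s_def using c0 by (simp add: arcosh_real_def add_pos_nonneg)
  define E where "E = c0 + s"
  have E1: "E > 1" unfolding E_def using c0 s0 by simp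
  define C where "C = (E + 1) / (E - 1)"
  have C0: "C > 1" unfolding C_def using E1 by simp
  have "Dl = ln C" unfolding Dl_def E C_def E_def ..
  hence Dl0: "Dl > 0" using C0 by simp
  have "cosh Dl = (C + inverse C) / 2" unfolding \<open>Dl = ln C\<close> using C0 by (simp add: cosh_ln_real)
  also have "\<dots> = (E^2 + 1) / (E^2 - 1)"
  proof -
    have EE: "E*E > 1" using E1 by (metis less_1_mult)
    have "(C + inverse C) / 2 = ((E+1)*(E+1) + (E-1)*(E-1)) / (2*((E+1)*(E-1)))" unfolding C_def using E1
      by (simp add: field_simps)
    also have "\<dots> = (2*(E*E + 1)) / (2*(E*E - 1))" by (simp add: algebra_simps)
    also have "\<dots> = (E*E + 1) / (E*E - 1)" by (rule mult_divide_mult_cancel_left) simp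
    also have "\<dots> = (E^2 + 1) / (E^2 - 1)" by (simp add: power2_eq_square)
    finally show ?thesis .
  qed
  also have "E^2 + 1 = 2 * c0 * E" unfolding E_def using ss by (simp add: power2_eq_square algebra_simps)
  also have "E^2 - 1 = 2 * s * E" unfolding E_def using ss by (simp add: power2_eq_square algebra_simps)
  also have "2 * c0 * E / (2 * s * E) = c0 / s" using E1 s0 by simp
  finally have cD: "cosh Dl = c0 / s" .
  have ch: "cosh (arcosh r) = r" using r by simp
  have h0: "arcosh r \<ge> 0" using r by simp
  have "arcosh r < Dl \<longleftrightarrow> r < c0 / s" using cosh_real_nonneg_less_iff[OF h0 less_imp_le[OF Dl0]] ch cD by simp
  also have "\<dots> \<longleftrightarrow> r * s < c0" using s0 by (simp add: pos_less_divide_eq)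
  also have "\<dots> \<longleftrightarrow> (r * s)^2 < c0^2"
  proof -
    have "0 \<le> r * s" "0 \<le> c0" using s0 r c0 by auto
    thus ?thesis using power_mono_iff[of c0 "r*s" 2] by (auto simp: not_le[symmetric])
  qed
  also have "(r*s)^2 = r^2 * (c0^2 - 1)" using ss by (simp add: power_mult_distrib)
  finally have A: "arcosh r < Dl \<longleftrightarrow> r^2 * (c0^2 - 1) < c0^2" .
  have "arcosh r = Dl \<longleftrightarrow> r = c0 / s" using cosh_eq_nonneg[OF h0 less_imp_le[OF Dl0]] ch cD by simp
  also have "\<dots> \<longleftrightarrow> r * s = c0" using s0 by (simp add: eq_divide_eq)
  also have "\<dots> \<longleftrightarrow> (r * s)^2 = c0^2" using s0 r c0 by (intro sq_eq_iff) auto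
  also have "(r*s)^2 = r^2 * (c0^2 - 1)" using ss by (simp add: power_mult_distrib)
  finally have B: "arcosh r = Dl \<longleftrightarrow> r^2 * (c0^2 - 1) = c0^2" .
  show ?thesis using A B by blast
qed




context hp begin

lemma trip_inj:
  fixes p q K W :: real
  assumes p: "p > 0" and q: "q > 0" and W: "W > 0"
  shows "inj_on (trip p q) {t. t^2 + 2*K*t + W = 0}"
proof (rule inj_onI)
  fix t1 t2 assume t1: "t1 \<in> {t. t^2 + 2*K*t + W = 0}" and t2: "t2 \<in> {t. t^2 + 2*K*t + W = 0}"
    and eq: "trip p q t1 = trip p q t2"
  show "t1 = t2"
  proof (rule ccontr)
    assume ne: "t1 \<noteq> t2"
    have prod: "t1 * t2 = W" using quad_vieta[of t1 K W t2] t1 t2 ne by simp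
    have n1: "t1 \<noteq> 0" "t2 \<noteq> 0" using prod W by auto
    have "Gi (p*q/t1) \<in> trip p q t2" using eq unfolding trip_def by auto
    hence "Gi (p*q/t1) = Gi (-p*t2/q) \<or> Gi (p*q/t1) = Gi (p*q/t2) \<or> Gi (p*q/t1) = Gi (-q*t2/p)"
      unfolding trip_def by blast
    hence "p*q/t1 = -p*t2/q \<or> p*q/t1 = p*q/t2 \<or> p*q/t1 = -q*t2/p" unfolding Gi_inj .
    moreover have "p*q/t1 \<noteq> -p*t2/q"
    proof
      assume "p*q/t1 = -p*t2/q"
      hence "p*q*q = -p*(t1*t2)" using n1 q by (simp add: field_simps)
      hence "p*(q*q) = p*(-W)" using prod by (simp add: algebra_simps)
      hence "q*q = -W" using p by (metis mult_left_cancel less_irrefl)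
      thus False using W by (metis neg_less_0_iff_less not_square_less_zero)
    qed
    moreover have "p*q/t1 \<noteq> -q*t2/p"
    proof
      assume "p*q/t1 = -q*t2/p"
      hence "p*p*q = -q*(t1*t2)" using n1 p by (simp add: field_simps)
      hence "q*(p*p) = q*(-W)" using prod by (simp add: algebra_simps)
      hence "p*p = -W" using q by (metis mult_left_cancel less_irrefl)
      thus False using W by (metis neg_less_0_iff_less not_square_less_zero)
    qed
    moreover have "p*q/t1 \<noteq> p*q/t2" using ne n1 p q by (simp add: field_simps)
    ultimately show False by blast
  qed
qed

lemma hdist_F: "z1 \<in> disk \<Longrightarrow> z2 \<in> disk \<Longrightarrow>
   hdist z1 z2 = arcosh (1 + cmod (F z1 - F z2)^2 / (2 * Re (F z1) * Re (F z2)))"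
  unfolding hdist_def using dist_F[of z1 z2] by (simp add: mult.assoc)

lemma hset:
  assumes L: "L = {z \<in> disk. Im (F z) = 0}" and R: "R \<in> disk"
  shows "hdist_set R L = arcosh (cmod (F R) / Re (F R))"
proof -
  define w x where "w = F R" "x = Re (F R)"
  have x0: "x > 0" unfolding w_x_def using F_disk R by simp
  have wx: "cmod w \<ge> x" unfolding w_x_def by (rule complex_Re_le_cmod)
  have w0: "cmod w > 0" using wx x0 by linarith
  have val: "hdist R z = arcosh (1 + cmod (w - of_real t)^2 / (2 * x * t))" if "z \<in> L" "t = Re (F z)" for z t
  proof -
    have "z \<in> disk" "Im (F z) = 0" using that L by auto
    hence "F z = of_real t" using that by (simp add: complex_eq_iff)
    thus ?thesis using hdist_F[OF R \<open>z \<in> disk\<close>] that unfolding w_x_def by simp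
  qed
  have key: "1 + cmod (w - of_real t)^2 / (2 * x * t) - cmod w / x = (t - cmod w)^2 / (2 * x * t)" if "t > 0" for t
  proof -
    have "cmod (w - of_real t)^2 = cmod w ^2 - 2 * x * t + t^2" unfolding w_x_def cmod_sq
      by (simp add: power2_eq_square algebra_simps)
    thus ?thesis using that x0 by (simp add: field_simps power2_eq_square)
  qed
  define z0 where "z0 = G (of_real (cmod w))"
  have z0: "z0 \<in> disk" "F z0 = of_real (cmod w)" unfolding z0_def using G_disk FG w0 by auto
  hence z0L: "z0 \<in> L" unfolding L by simp
  have m: "hdist R z0 = arcosh (cmod w / x)"
  proof -
    have "hdist R z0 = arcosh (1 + cmod (w - of_real (cmod w))^2 / (2 * x * cmod w))"
      using val[OF z0L] z0 by simp
    also have "1 + cmod (w - of_real (cmod w))^2 / (2 * x * cmod w) = cmod w / x"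
      using key[OF w0] by simp
    finally show ?thesis .
  qed
  have lb: "arcosh (cmod w / x) \<le> hdist R z" if "z \<in> L" for z
  proof -
    define t where "t = Re (F z)"
    have t0: "t > 0" unfolding t_def using that L F_disk by auto
    have r1: "cmod w / x \<ge> 1" using wx x0 by simp
    have "cmod w / x \<le> 1 + cmod (w - of_real t)^2 / (2 * x * t)" using key[OF t0] x0 t0
      by (smt (verit) divide_nonneg_pos zero_le_power2 mult_pos_pos)
    hence "arcosh (cmod w / x) \<le> arcosh (1 + cmod (w - of_real t)^2 / (2 * x * t))"
      using r1 arcosh_less_iff_real[of "1 + cmod (w - of_real t)^2 / (2 * x * t)" "cmod w / x"]
      by (smt (verit))
    thus ?thesis using val[OF that t_def] by simp
  qed
  have "Inf (hdist R ` L) = arcosh (cmod w / x)"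
    by (rule cInf_eq_minimum) (use z0L m lb in \<open>auto intro: rev_image_eqI[OF z0L]\<close>)
  thus ?thesis unfolding hdist_set_def w_x_def .
qed

end



context hp begin

lemma line_through:
  assumes P: "P \<in> disk" "Im (F P) = 0" and R: "R \<in> disk" "Im (F R) \<noteq> 0"
  shows "\<exists>L'. hyp_line L' \<and> P \<in> L' \<and> R \<in> L'"
proof -
  define p x y where "p = Re (F P)" "x = Re (F R)" "y = Im (F R)"
  have p0: "p > 0" unfolding p_x_y_def using F_disk P by simp
  have y0: "y \<noteq> 0" unfolding p_x_y_def using R by simp
  define c where "c = (x^2 + y^2 - p^2) / (2*y)"
  define s where "s = sqrt (p^2 + c^2)"
  have s0: "s > 0" unfolding s_def using p0 by (simp add: add_pos_nonneg)
  have ss: "s^2 = p^2 + c^2" unfolding s_def by (simp add: add_pos_nonneg)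
  define a b where "a = Gi (c + s)" "b = Gi (c - s)"
  have ab: "a \<noteq> b" unfolding a_b_def Gi_inj using s0 by simp
  have circ: "cmod a = 1" "cmod b = 1" unfolding a_b_def by (rule Gi_circ)+
  have ne1: "a \<noteq> e1" "b \<noteq> e1" unfolding a_b_def by (rule Gi_ne)+
  have Fa: "Im (F a) = c + s" "Im (F b) = c - s" unfolding a_b_def by (rule Im_F_Gi)+
  have g: "geo a b = {z \<in> disk. cmod (F z) ^ 2 - (Im (F a) + Im (F b)) * Im (F z) + Im (F a) * Im (F b) = 0}"
    by (rule geo_semi[OF circ ab ne1])
  have prod: "(c + s) * (c - s) = - (p^2)" using ss by (simp add: power2_eq_square algebra_simps)
  have FP2: "cmod (F P)^2 = p^2" using P(2) unfolding p_x_y_def cmod_sq by simp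
  have FR2: "cmod (F R)^2 = x^2 + y^2" unfolding p_x_y_def cmod_sq by simp
  have "P \<in> geo a b" unfolding g Fa using P FP2 prod by simp
  moreover have "R \<in> geo a b"
  proof -
    have "x^2 + y^2 - (c + s + (c - s)) * y + (c + s) * (c - s) = x^2 + y^2 - 2 * c * y - p^2"
      unfolding prod by simp
    also have "\<dots> = 0" unfolding c_def using y0 by (simp add: field_simps power2_eq_square)
    finally have "x^2 + y^2 - (c + s + (c - s)) * y + (c + s) * (c - s) = 0" .
    thus ?thesis unfolding g Fa using R FR2 p_x_y_def by simp
  qed
  moreover have "hyp_line (geo a b)"
  proof -
    have "hyp_line_joining a b (geo a b)" using GEO[OF circ ab] by simp
    thus ?thesis unfolding hyp_line_joining_def hyp_line_def by blast
  qed
  ultimately show ?thesis by blast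
qed

end

theorem theorem2p1:
  fixes P Q R :: complex and L :: "complex set"
  assumes "P \<in> disk" "Q \<in> disk" "R \<in> disk"
    and noncol: "\<not> (\<exists>L'. hyp_line L' \<and> P \<in> L' \<and> Q \<in> L' \<and> R \<in> L')"
    and L: "hyp_line L" "P \<in> L" "Q \<in> L"
  defines "S \<equiv> {T. circumscribing_ideal_triangle T P Q R}"
    and "h \<equiv> hdist_set R L"
  shows "finite S \<and>
    card S = (if h < Delta P Q then 0 else if h = Delta P Q then 1 else 2)"
proof -
  obtain e1 e2 where e: "cmod e1 = 1" "cmod e2 = 1" "e1 \<noteq> e2" and Le: "L = geo e1 e2"
    using hyp_line_endpoints[OF L(1)] by blast
  interpret hp e1 e2 1 using e by unfold_locales auto
  have Fe2: "F e2 = 0" unfolding F_def by simp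
  have LF: "L = {z \<in> disk. Im (F z) = 0}" unfolding Le geo_ray[OF e(2) e(3)[symmetric]] Fe2 by simp
  have PL: "P \<in> disk" "Im (F P) = 0" and QL: "Q \<in> disk" "Im (F Q) = 0" using L(2,3) LF by auto
  have R: "R \<in> disk" by fact
  have RL: "Im (F R) \<noteq> 0"
  proof
    assume "Im (F R) = 0"
    hence "R \<in> L" using LF R by simp
    thus False using noncol L by blast
  qed
  have PQ: "P \<noteq> Q"
  proof
    assume "P = Q"
    then obtain L' where "hyp_line L'" "P \<in> L'" "Q \<in> L'" "R \<in> L'" using line_through[OF PL R RL] by blast
    thus False using noncol by blast
  qed
  define p q x y W where "p = Re (F P)" "q = Re (F Q)" "x = Re (F R)" "y = Im (F R)" "W = cmod (F R)^2"
  define c0 where "c0 = (p^2 + q^2) / (2 * p * q)"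
  define K where "K = c0 * y"
  have p0: "p > 0" and q0: "q > 0" and x0: "x > 0" unfolding p_q_x_y_W_def using F_disk PL QL R by auto
  have FPr: "F P = of_real p" and FQr: "F Q = of_real q" unfolding p_q_x_y_W_def using PL QL by (simp_all add: complex_eq_iff)
  have pq: "p \<noteq> q"
  proof
    assume "p = q"
    hence "F P = F Q" using FPr FQr by simp
    thus False using F_inj[OF disk_ne[OF PL(1)] disk_ne[OF QL(1)]] PQ by blast
  qed
  have W0: "W > 0" unfolding p_q_x_y_W_def using x0 p_q_x_y_W_def by (auto simp: complex_eq_iff)
  have Wxy: "W = x^2 + y^2" unfolding p_q_x_y_W_def cmod_sq ..
  have S_eq: "S = trip p q ` {t. t^2 + 2*K*t + W = 0}"
    unfolding S_def K_def c0_def p_q_x_y_W_def using circ_char[OF PL QL R] pq unfolding p_q_x_y_W_def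
    by auto
  have fin: "finite S" and cardS: "card S = (if K^2 < W then 0 else if K^2 = W then 1 else 2)"
    using quad_roots[OF W0, of K] card_image[OF trip_inj[OF p0 q0 W0, of K]] unfolding S_eq by auto
  have h_eq: "h = arcosh (sqrt W / x)" unfolding h_def hset[OF LF R] p_q_x_y_W_def by simp
  have c0_eq: "1 + cmod (F P - F Q)^2 / (2 * Re (F P) * Re (F Q)) = c0"
    unfolding FPr FQr c0_def using p0 q0 by (simp add: field_simps power2_eq_square flip: of_real_diff)
  have dPQ: "hdist P Q = arcosh c0" using hdist_F[OF PL(1) QL(1)] c0_eq by simp
  have c01: "c0 > 1"
  proof -
    have "(p - q)^2 > 0" using pq by simp
    hence "p^2 + q^2 > 2*p*q" by (simp add: power2_eq_square algebra_simps)
    thus ?thesis unfolding c0_def using p0 q0 by simp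
  qed
  have r1: "sqrt W / x \<ge> 1"
  proof -
    have "x^2 \<le> W" using Wxy by simp
    hence "x \<le> sqrt W" using x0 by (simp add: real_le_rsqrt)
    thus ?thesis using x0 by simp
  qed
  have DC: "(h < Delta P Q \<longleftrightarrow> (sqrt W / x)^2 * (c0^2 - 1) < c0^2) \<and> (h = Delta P Q \<longleftrightarrow> (sqrt W / x)^2 * (c0^2 - 1) = c0^2)"
    unfolding h_eq Delta_def dPQ by (rule delta_compare[OF c01 r1])
  have sw: "(sqrt W / x)^2 = W / x^2" using W0 by (simp add: power_divide)
  have x2: "x^2 > 0" using x0 by simp
  have "(sqrt W / x)^2 * (c0^2 - 1) < c0^2 \<longleftrightarrow> W * (c0^2 - 1) < c0^2 * x^2"
    unfolding sw using x2 by (simp add: field_simps)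
  also have "\<dots> \<longleftrightarrow> K^2 < W" unfolding K_def Wxy by (simp add: power_mult_distrib algebra_simps)
  finally have lt: "h < Delta P Q \<longleftrightarrow> K^2 < W" using DC by blast
  have "(sqrt W / x)^2 * (c0^2 - 1) = c0^2 \<longleftrightarrow> W * (c0^2 - 1) = c0^2 * x^2"
    unfolding sw using x2 by (simp add: field_simps)
  also have "\<dots> \<longleftrightarrow> K^2 = W" unfolding K_def Wxy by (simp add: power_mult_distrib algebra_simps)
  finally have eq: "h = Delta P Q \<longleftrightarrow> K^2 = W" using DC by blast
  show ?thesis using fin cardS lt eq by simp
qed



end
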